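(* Let $\mathfrak g$ be a Lie ring satisfying $\mathrm{ad}(u)\,\mathrm{ad}([u,w])=0$ for all $u,w\in\mathfrak g$. If $\mathfrak g$ is generated by finitely many elements of the form $[x,y]$ with $x,y\in\mathfrak g$, then $\mathfrak g$ is nilpotent.
   Context: For $u\in\mathfrak g$, $\mathrm{ad}(u):\mathfrak g\to\mathfrak g$ is $v\mapsto[v,u]$. Maps are composed left to right: $v\,\mathrm{ad}(u)\mathrm{ad}(w)=[[v,u],w]$. *)

theory Defs
  imports Main
begin

definition lie_ring :: "('a::ab_group_add \<Rightarrow> 'a \<Rightarrow> 'a) \<Rightarrow> bool" where
  "lie_ring br \<longleftrightarrow>
     (\<forall>x y z. br (x + y) z = br x z + br y z) \<and>
     (\<forall>x y z. br x (y + z) = br x y + br x z) \<and>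
     (\<forall>x. br x x = 0) \<and>
     (\<forall>x y z. br x (br y z) + br y (br z x) + br z (br x y) = 0)"

inductive_set add_span :: "'a::ab_group_add set \<Rightarrow> 'a set" for S where
  gen: "x \<in> S \<Longrightarrow> x \<in> add_span S"
| zero: "0 \<in> add_span S"
| add: "x \<in> add_span S \<Longrightarrow> y \<in> add_span S \<Longrightarrow> x + y \<in> add_span S"
| neg: "x \<in> add_span S \<Longrightarrow> - x \<in> add_span S"

inductive_set lie_span :: "('a::ab_group_add \<Rightarrow> 'a \<Rightarrow> 'a) \<Rightarrow> 'a set \<Rightarrow> 'a set" for br S where
  gen: "x \<in> S \<Longrightarrow> x \<in> lie_span br S"
| zero: "0 \<in> lie_span br S"
| add: "x \<in> lie_span br S \<Longrightarrow> y \<in> lie_span br S \<Longrightarrow> x + y \<in> lie_span br S"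
| neg: "x \<in> lie_span br S \<Longrightarrow> - x \<in> lie_span br S"
| br: "x \<in> lie_span br S \<Longrightarrow> y \<in> lie_span br S \<Longrightarrow> br x y \<in> lie_span br S"

fun lower_central :: "('a::ab_group_add \<Rightarrow> 'a \<Rightarrow> 'a) \<Rightarrow> nat \<Rightarrow> 'a set" where
  "lower_central br 0 = UNIV"
| "lower_central br (Suc n) = add_span {br x y | x y. x \<in> lower_central br n}"

definition lie_nilpotent :: "('a::ab_group_add \<Rightarrow> 'a \<Rightarrow> 'a) \<Rightarrow> bool" where
  "lie_nilpotent br \<longleftrightarrow> (\<exists>n. lower_central br n = {0})"

end

theory Submission
  imports Defs
begin

definition jac :: "('a::ab_group_add \<Rightarrow> 'a \<Rightarrow> 'a) \<Rightarrow> 'a \<Rightarrow> 'a \<Rightarrow> 'a \<Rightarrow> 'a" where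
  "jac br u v w = br (br u v) w + br (br v w) u + br (br w u) v"

definition Lf :: "('a::ab_group_add \<Rightarrow> 'a \<Rightarrow> 'a) \<Rightarrow> 'a \<Rightarrow> 'a \<Rightarrow> 'a \<Rightarrow> 'a \<Rightarrow> 'a" where
  "Lf br u v w x = br (br u v) (br w x) + br (br u w) (br v x)"

locale LR =
  fixes br :: "'a::ab_group_add \<Rightarrow> 'a \<Rightarrow> 'a"
  assumes ladd: "br (x + y) z = br x z + br y z"
  and radd: "br x (y + z) = br x y + br x z"
  and alt: "br x x = 0"
  and jacobi: "br x (br y z) + br y (br z x) + br z (br x y) = 0"
  and ident: "br (br v u) (br u w) = 0"
begin

lemma l0[simp]: "br 0 y = 0"
  using ladd[of 0 0 y] by simp
lemma r0[simp]: "br x 0 = 0"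
  using radd[of x 0 0] by simp
lemma lneg[simp]: "br (- x) y = - br x y"
  using ladd[of "-x" x y] by (simp add: eq_neg_iff_add_eq_0)
lemma rneg[simp]: "br x (- y) = - br x y"
  using radd[of x "-y" y] by (simp add: eq_neg_iff_add_eq_0)
lemma anti: "br y x = - br x y"
proof -
  have "br x y + br y x = 0" using alt[of "x+y", unfolded ladd radd] by (simp add: alt add_ac)
  then show ?thesis by (simp add: eq_neg_iff_add_eq_0 add.commute)
qed

lemma lin: "br (br v u) (br u' w) + br (br v u') (br u w) = 0"
proof -
  have "br (br v (u + u')) (br (u + u') w) = 0" by (rule ident)
  then show ?thesis by (simp add: ladd radd ident add_ac)
qed

lemma Lf0: "Lf br u v w x = 0"
  unfolding Lf_def by (rule lin)

lemma twoF: "br (br a b) (br c d) + br (br a b) (br c d) = 0"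
proof -
  have s1: "br (br a b) (br c d) = - br (br a c) (br b d)"
    using lin[of a b c d] by (simp add: eq_neg_iff_add_eq_0)
  have s2: "br (br a c) (br b d) = - br (br c a) (br b d)"
    by (subst anti[of c a]) simp
  have s3: "br (br c a) (br b d) = - br (br c a) (br d b)"
    by (subst anti[of d b]) simp
  have s4: "br (br c a) (br d b) = - br (br c d) (br a b)"
    using lin[of c a d b] by (simp add: eq_neg_iff_add_eq_0)
  have s5: "br (br c d) (br a b) = - br (br a b) (br c d)"
    by (rule anti)
  have "br (br a b) (br c d) = - br (br a b) (br c d)"
    using s1 s2 s3 s4 s5 by simp
  then show ?thesis by (simp add: eq_neg_iff_add_eq_0)
qed

end

locale CH2 = LR br for br :: "'a::ab_group_add \<Rightarrow> 'a \<Rightarrow> 'a" +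
  assumes c2: "(x::'a) + x = 0"
begin

lemma c2b: "(x::'a) + (x + y) = y"
  by (metis add.assoc add.left_neutral c2)

lemma negid[simp]: "- (x::'a) = x"
  by (rule minus_unique[OF c2])

lemma comm: "br x y = br y x"
  using anti[of x y] by simp

lemma jac0: "jac br u v w = 0"
  unfolding jac_def using jacobi[of u v w] by (simp add: comm add_ac)

lemma K: "br (br (br a b) (br c d)) (br e f) = 0"
proof -
  have "br (br (br a b) (br c d)) (br e f) = (Lf br b (br a f) c (br d e)) + (Lf br (br b (br c f)) d e a) + (Lf br (br a f) (br b d) e c) + (jac br (br a d) (br b (br c f)) e) + (Lf br (br b d) c e (br a f)) + (Lf br e (br c f) d (br a b)) + (Lf br d (br a e) b (br c f)) + (jac br (br a f) (br b d) (br c e)) + (br (Lf br a b f c) (br d e)) + (Lf br (br b d) (br a c) f e) + (jac br (br a b) (br e (br c f)) d) + (Lf br e (br a d) b (br c f)) + (Lf br d b (br e (br c f)) a) + (Lf br d b (br c e) (br a f)) + (Lf br (br a c) e f (br b d)) + (br (Lf br b a (br c f) d) e) + (jac br (br a e) (br b (br c f)) d) + (br (Lf br c a d b) (br e f)) + (br (Lf br b a d (br c f)) e) + (br (Lf br c d f a) (br b e)) + (Lf br (br a f) (br c d) e b) + (br (Lf br b c e d) (br a f)) + (br (Lf br b d e c) (br a f)) + (br (jac br a c f) (br e (br b d))) + (jac br (br a f) (br b c) (br d e)) + (Lf br (br c d) b e (br a f)) + (br (jac br a (br c f) e) (br b d)) + (jac br (br a (br c f)) (br b d) e) + (br (Lf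 br b a (br c f) e) d) + (br (jac br c d e) (br b (br a f)))"
    unfolding jac_def Lf_def by (simp add: ladd radd comm add_ac c2 c2b)
  also have "\<dots> = 0" by (simp add: jac0 Lf0)
  finally show ?thesis .
qed

end

lemma dbl_add: "(a::'a::ab_group_add) + a = 0 \<Longrightarrow> b + b = 0 \<Longrightarrow> (a + b) + (a + b) = 0"
proof -
  assume "a + a = 0" "b + b = 0"
  have "(a + b) + (a + b) = (a + a) + (b + b)" by (simp add: add_ac)
  then show ?thesis using \<open>a + a = 0\<close> \<open>b + b = 0\<close> by simp
qed

lemma dbl_neg: "(a::'a::ab_group_add) + a = 0 \<Longrightarrow> - a + - a = 0"
  by (metis minus_add_distrib neg_equal_0_iff_equal)

theorem lemma4p6:
  fixes br :: "'a::ab_group_add \<Rightarrow> 'a \<Rightarrow> 'a"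
  assumes "lie_ring br"
    and "\<forall>u w v. br (br v u) (br u w) = 0"
    and "\<exists>G. finite G \<and> G \<subseteq> {br x y | x y. True} \<and> lie_span br G = UNIV"
  shows "lie_nilpotent br"
proof -
  interpret LR br
    using assms(1,2) unfolding lie_ring_def by unfold_locales auto
  define S where "S = {br x y | x y. True}"
  obtain G where G: "G \<subseteq> S" "lie_span br G = UNIV" using assms(3) S_def by auto
  have sp: "t \<in> add_span S" for t
  proof -
    have "t \<in> add_span S" if "t \<in> lie_span br G" for t
      using that
    proof (induction rule: lie_span.induct)
      case (gen x) then show ?case using G by (auto intro: add_span.gen)
    next
      case zero then show ?case by (auto intro: add_span.zero)
    next
      case (add x y) then show ?case by (auto intro: add_span.add)
    next
      case (neg x) then show ?case by (auto intro: add_span.neg)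
    next
      case (br x y) then show ?case unfolding S_def by (auto intro: add_span.gen)
    qed
    then show ?thesis using G(2) by auto
  qed
  have ind: "P t" if h1: "\<And>x y. P (br x y)" and h2: "P 0"
    and h3: "\<And>x y. P x \<Longrightarrow> P y \<Longrightarrow> P (x + y)" and h4: "\<And>x. P x \<Longrightarrow> P (- x)" for P t
  proof -
    have "P t" if "t \<in> add_span S" for t
      using that
    proof (induction rule: add_span.induct)
      case (gen x) then show ?case using h1 unfolding S_def by auto
    next
      case zero then show ?case by (rule h2)
    next
      case (add x y) then show ?case using h3 by blast
    next
      case (neg x) then show ?case using h4 by blast
    qed
    then show ?thesis using sp by blast
  qed
  have c2a: "br (br a b) q + br (br a b) q = 0" for a b q
    by (rule ind[where P="\<lambda>q. br (br a b) q + br (br a b) q = 0"])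
       (auto simp: twoF radd intro: dbl_add dest: dbl_neg)
  have c2b: "br p q + br p q = 0" for p q
    by (rule ind[where P="\<lambda>p. br p q + br p q = 0"])
       (auto simp: c2a ladd intro: dbl_add dest: dbl_neg)
  have c2: "(t::'a) + t = 0" for t
    by (rule ind[where P="\<lambda>t. t + t = 0"])
       (auto simp: c2b intro: dbl_add dest: dbl_neg)
  interpret CH2 br
    by unfold_locales (rule c2)
  have k2: "br (br (br a b) (br c d)) z = 0" for a b c d z
    by (rule ind[where P="\<lambda>z. br (br (br a b) (br c d)) z = 0"]) (auto simp: K radd)
  have k3: "br (br (br a b) w) z = 0" for a b w z
    by (rule ind[where P="\<lambda>w. br (br (br a b) w) z = 0"]) (auto simp: k2 radd ladd)
  have k4: "br (br y w) z = 0" for y w z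
    by (rule ind[where P="\<lambda>y. br (br y w) z = 0"]) (auto simp: k3 radd ladd)
  have k5: "br t z = 0" for t z
    by (rule ind[where P="\<lambda>t. br t z = 0"]) (auto simp: k4 ladd)
  have k6: "(t::'a) = 0" for t
    by (rule ind[where P="\<lambda>t. t = 0"]) (auto simp: k5)
  have "lower_central br 0 = {0}" using k6 by auto
  then show ?thesis unfolding lie_nilpotent_def by blast
qed

end
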